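(* Let $H$ be a digraph (possibly with loops) and let $D$ be an $H$-colored semicomplete digraph. If $k \geq 3$, then $D$ has a $(k,H)$-kernel.
   Context: All digraphs are finite. A digraph is semicomplete if every two distinct vertices are joined by at least one arc. $D$ has no loops and comes with a map $\rho: A(D)\to V(H)$. For a walk $W=(x_0,\ldots,x_n)$ in $D$, there is an obstruction on $x_i$ if $(\rho(x_{i-1},x_i),\rho(x_i,x_{i+1})) \notin A(H)$; for an open walk this is considered at internal vertices $x_i$, $1\le i\le n-1$, for a closed walk at all $i\in\{0,\ldots,n-1\}$ with indices modulo $n$. $O_H(W)$ is the set of indices with an obstruction; the $H$-length is $l_H(W)=|O_H(W)|+1$ for open $W$ and $|O_H(W)|$ for closed $W$. A $(k,H)$-kernel ($k\ge2$) is a set $S\subseteq V(D)$ such that for every two distinct $u,v\in S$ every directed $uv$-path in $D$ has $H$-length at least $k$, and for every $x\in V(D)\setminus S$ there is a directed path from $x$ to a vertex of $S$ of $H$-length at most $k-1$. *)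

theory Defs
  imports Main
begin

definition is_dipath :: "'a set \<Rightarrow> ('a \<times> 'a) set \<Rightarrow> 'a list \<Rightarrow> bool" where
  "is_dipath V A xs \<longleftrightarrow> xs \<noteq> [] \<and> distinct xs \<and> set xs \<subseteq> V \<and>
     (\<forall>i. Suc i < length xs \<longrightarrow> (xs ! i, xs ! Suc i) \<in> A)"

definition obstructions :: "('a \<times> 'a \<Rightarrow> 'c) \<Rightarrow> ('c \<times> 'c) set \<Rightarrow> 'a list \<Rightarrow> nat set" where
  "obstructions \<rho> AH xs = {i. 1 \<le> i \<and> Suc i < length xs \<and>
     (\<rho> (xs ! (i - 1), xs ! i), \<rho> (xs ! i, xs ! Suc i)) \<notin> AH}"

definition H_length :: "('a \<times> 'a \<Rightarrow> 'c) \<Rightarrow> ('c \<times> 'c) set \<Rightarrow> 'a list \<Rightarrow> nat" where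
  "H_length \<rho> AH xs = card (obstructions \<rho> AH xs) + 1"

definition semicomplete :: "'a set \<Rightarrow> ('a \<times> 'a) set \<Rightarrow> bool" where
  "semicomplete V A \<longleftrightarrow> (\<forall>u\<in>V. \<forall>v\<in>V. u \<noteq> v \<longrightarrow> (u, v) \<in> A \<or> (v, u) \<in> A)"

definition kH_kernel ::
  "'a set \<Rightarrow> ('a \<times> 'a) set \<Rightarrow> ('c \<times> 'c) set \<Rightarrow> ('a \<times> 'a \<Rightarrow> 'c) \<Rightarrow> nat \<Rightarrow> 'a set \<Rightarrow> bool" where
  "kH_kernel V A AH \<rho> k S \<longleftrightarrow> S \<subseteq> V \<and>
     (\<forall>u\<in>S. \<forall>v\<in>S. u \<noteq> v \<longrightarrow>
        (\<forall>p. is_dipath V A p \<and> hd p = u \<and> last p = v \<longrightarrow> H_length \<rho> AH p \<ge> k)) \<and>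
     (\<forall>x\<in>V - S. \<exists>p. is_dipath V A p \<and> hd p = x \<and> last p \<in> S \<and> H_length \<rho> AH p \<le> k - 1)"

end

theory Submission
  imports Defs
begin

lemma HL2: "H_length \<rho> AH [x, v] = 1"
  unfolding H_length_def obstructions_def by simp

lemma HL3: "H_length \<rho> AH [x, y, v] \<le> 2"
proof -
  have "obstructions \<rho> AH [x, y, v] \<subseteq> {1}"
    unfolding obstructions_def by auto
  then have "card (obstructions \<rho> AH [x, y, v]) \<le> 1"
    by (metis card_mono finite.emptyI finite.insertI is_singletonI is_singleton_altdef)
  then show ?thesis unfolding H_length_def by simp
qed

theorem theorem6:
  fixes V :: "'a set" and A :: "('a \<times> 'a) set"
    and VH :: "'c set" and AH :: "('c \<times> 'c) set"
    and \<rho> :: "'a \<times> 'a \<Rightarrow> 'c" and k :: nat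
  assumes "finite V" and "A \<subseteq> V \<times> V" and "\<forall>v. (v, v) \<notin> A"
    and "finite VH" and "AH \<subseteq> VH \<times> VH"
    and "\<forall>a\<in>A. \<rho> a \<in> VH"
    and "semicomplete V A"
    and "k \<ge> 3"
  shows "\<exists>S. kH_kernel V A AH \<rho> k S"
proof (cases "V = {}")
  case True
  then show ?thesis unfolding kH_kernel_def by auto
next
  case False
  define f where "f = (\<lambda>v. card {y\<in>V. (y, v) \<in> A})"
  have fin: "finite (f ` V)" using assms(1) by simp
  obtain v where vV: "v \<in> V" and fv: "f v = Max (f ` V)"
    using Max_in[OF fin] False by (metis empty_is_image imageE)
  have vmax: "f x \<le> f v" if "x \<in> V" for x
    using Max_ge[OF fin] that fv by auto
  have reach: "\<exists>p. is_dipath V A p \<and> hd p = x \<and> last p = v \<and> H_length \<rho> AH p \<le> 2"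
    if xV: "x \<in> V" and xv: "x \<noteq> v" for x
  proof (cases "(x, v) \<in> A")
    case True
    then have "is_dipath V A [x, v]"
      unfolding is_dipath_def using xV vV xv by (auto simp: less_Suc_eq nth_Cons')
    then show ?thesis using HL2[of \<rho> AH x v] by (intro exI[of _ "[x, v]"]) auto
  next
    case False
    show ?thesis
    proof (cases "\<exists>y. (x, y) \<in> A \<and> (y, v) \<in> A")
      case True
      then obtain y where xy: "(x, y) \<in> A" and yv: "(y, v) \<in> A" by blast
      have "x \<noteq> y" "y \<noteq> v" using xy yv assms(3) by auto
      moreover have "y \<in> V" using xy assms(2) by auto
      ultimately have "is_dipath V A [x, y, v]"
        unfolding is_dipath_def using xV vV xv xy yv
        by (auto simp: less_Suc_eq nth_Cons')
      then show ?thesis using HL3[of \<rho> AH x y v] by (intro exI[of _ "[x, y, v]"]) auto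
    next
      case nb: False
      have vx: "(v, x) \<in> A" using False assms(7) xV vV xv unfolding semicomplete_def by blast
      have sub: "insert v {y\<in>V. (y, v) \<in> A} \<subseteq> {y\<in>V. (y, x) \<in> A}"
      proof
        fix y assume "y \<in> insert v {y\<in>V. (y, v) \<in> A}"
        then consider "y = v" | "y \<in> V" "(y, v) \<in> A" by auto
        then show "y \<in> {y\<in>V. (y, x) \<in> A}"
        proof cases
          case 1 then show ?thesis using vx vV by simp
        next
          case 2
          then have "(x, y) \<notin> A" using nb by blast
          moreover have "y \<noteq> x" using 2 False by auto
          ultimately show ?thesis using 2 xV assms(7) unfolding semicomplete_def by blast
        qed
      qed
      have "v \<notin> {y\<in>V. (y, v) \<in> A}" using assms(3) by auto
      then have c1: "card (insert v {y\<in>V. (y, v) \<in> A}) = f v + 1"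
        unfolding f_def using assms(1) by simp
      have c2: "card (insert v {y\<in>V. (y, v) \<in> A}) \<le> f x" unfolding f_def
        using card_mono[OF _ sub] assms(1) by simp
      show ?thesis using vmax[OF xV] c1 c2 by simp
    qed
  qed
  have "kH_kernel V A AH \<rho> k {v}"
    unfolding kH_kernel_def
  proof (intro conjI ballI)
    show "{v} \<subseteq> V" using vV by simp
  next
    fix u w assume "u \<in> {v}" "w \<in> {v}"
    then show "u \<noteq> w \<longrightarrow> (\<forall>p. is_dipath V A p \<and> hd p = u \<and> last p = w \<longrightarrow> k \<le> H_length \<rho> AH p)"
      by simp
  next
    fix x assume "x \<in> V - {v}"
    then obtain p where "is_dipath V A p \<and> hd p = x \<and> last p = v \<and> H_length \<rho> AH p \<le> 2"
      using reach by blast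
    then show "\<exists>p. is_dipath V A p \<and> hd p = x \<and> last p \<in> {v} \<and> H_length \<rho> AH p \<le> k - 1"
      using assms(8) by (intro exI[of _ p]) auto
  qed
  then show ?thesis by blast
qed

end
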